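(* Let $X$ be a compact metrizable space and $\Delta$ a weak*-closed set of Borel probability measures on $X$. The C*-algebra $\ell^\infty(\mathrm{C}(X))/J_{2,\omega,\Delta}$ has real rank zero if and only if its invertible self-adjoint elements are dense in the set of its self-adjoint elements with respect to $\|\cdot\|_{2,\omega,\Delta}$.
   Context: Measures act as traces $\tau_\mu(h)=\int h\,d\mu$. $\omega$ is a free ultrafilter on $\mathbb N$; $J_{2,\omega,\Delta}=\{(f_n)\in\ell^\infty(\mathrm{C}(X)):\lim_{n\to\omega}\sup_{\tau\in\Delta}\tau(|f_n|^2)=0\}$; $\|(a_n)\|_{2,\omega,\Delta}=\lim_{n\to\omega}\sup_{\tau\in\Delta}\tau(|a_n|^2)$, well defined on the quotient. Real rank zero means the invertible self-adjoint elements are norm-dense in the self-adjoint elements. *)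

theory Defs
  imports "HOL-Analysis.Analysis" "HOL-Probability.Probability"
begin

definition free_ultrafilter :: "nat filter \<Rightarrow> bool" where
  "free_ultrafilter F \<longleftrightarrow> F \<noteq> bot
     \<and> (\<forall>P. eventually P F \<or> eventually (\<lambda>n. \<not> P n) F)
     \<and> (\<forall>m. eventually (\<lambda>n. n \<noteq> m) F)"

text \<open>Borel probability measures on the (compact metric) space X = UNIV.\<close>
definition borel_prob :: "'a::topological_space measure \<Rightarrow> bool" where
  "borel_prob \<mu> \<longleftrightarrow> prob_space \<mu> \<and> sets \<mu> = sets borel"

text \<open>Closedness in the weak* topology (generated by integration against
  continuous functions), via basic weak* neighbourhoods.\<close>
definition weak_star_closed :: "'a::topological_space measure set \<Rightarrow> bool" where
  "weak_star_closed \<Delta> \<longleftrightarrow>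
     (\<forall>\<mu>. borel_prob \<mu> \<and>
        (\<forall>H \<epsilon>. finite H \<and> (\<forall>h\<in>H. continuous_on UNIV (h :: 'a \<Rightarrow> real)) \<and> \<epsilon> > 0 \<longrightarrow>
           (\<exists>\<nu>\<in>\<Delta>. \<forall>h\<in>H. \<bar>(\<integral>t. h t \<partial>\<mu>) - (\<integral>t. h t \<partial>\<nu>)\<bar> < \<epsilon>))
        \<longrightarrow> \<mu> \<in> \<Delta>)"

text \<open>The C*-algebra \<open>\<ell>\<^sup>\<infinity>(C(X))\<close>: uniformly bounded sequences of continuous
  complex functions, with pointwise operations.\<close>
definition linf_CX :: "(nat \<Rightarrow> 'a::topological_space \<Rightarrow> complex) set" where
  "linf_CX = {f. (\<forall>n. continuous_on UNIV (f n)) \<and> (\<exists>B. \<forall>n t. cmod (f n t) \<le> B)}"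

definition sup_norm :: "(nat \<Rightarrow> 'a \<Rightarrow> complex) \<Rightarrow> real" where
  "sup_norm f = (SUP p\<in>UNIV. cmod (f (fst p) (snd p)))"

text \<open>\<open>sup_{\<tau>\<in>\<Delta>} \<tau>(|g|\<^sup>2)\<close> (valued in ennreal so that the empty supremum is 0).\<close>
definition tau_sup2 :: "'a::topological_space measure set \<Rightarrow> ('a \<Rightarrow> complex) \<Rightarrow> ennreal" where
  "tau_sup2 \<Delta> g = (SUP \<tau>\<in>\<Delta>. \<integral>\<^sup>+ t. ennreal ((cmod (g t))\<^sup>2) \<partial>\<tau>)"

definition J2 :: "nat filter \<Rightarrow> 'a::topological_space measure set \<Rightarrow> (nat \<Rightarrow> 'a \<Rightarrow> complex) set" where
  "J2 \<omega> \<Delta> = {f \<in> linf_CX. ((\<lambda>n. tau_sup2 \<Delta> (f n)) \<longlongrightarrow> 0) \<omega>}"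

definition norm2 :: "nat filter \<Rightarrow> 'a::topological_space measure set \<Rightarrow> (nat \<Rightarrow> 'a \<Rightarrow> complex) \<Rightarrow> ennreal" where
  "norm2 \<omega> \<Delta> a = Lim \<omega> (\<lambda>n. tau_sup2 \<Delta> (a n))"

text \<open>Quotient C*-algebra \<open>\<ell>\<^sup>\<infinity>(C(X))/J\<close>, described through representatives.\<close>
definition q_norm :: "nat filter \<Rightarrow> 'a::topological_space measure set \<Rightarrow> (nat \<Rightarrow> 'a \<Rightarrow> complex) \<Rightarrow> real" where
  "q_norm \<omega> \<Delta> a = Inf {sup_norm (\<lambda>n t. a n t + j n t) | j. j \<in> J2 \<omega> \<Delta>}"

definition q_selfadjoint :: "nat filter \<Rightarrow> 'a::topological_space measure set \<Rightarrow> (nat \<Rightarrow> 'a \<Rightarrow> complex) \<Rightarrow> bool" where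
  "q_selfadjoint \<omega> \<Delta> a \<longleftrightarrow> (\<lambda>n t. a n t - cnj (a n t)) \<in> J2 \<omega> \<Delta>"

definition q_invertible :: "nat filter \<Rightarrow> 'a::topological_space measure set \<Rightarrow> (nat \<Rightarrow> 'a \<Rightarrow> complex) \<Rightarrow> bool" where
  "q_invertible \<omega> \<Delta> a \<longleftrightarrow> (\<exists>b\<in>linf_CX.
      (\<lambda>n t. a n t * b n t - 1) \<in> J2 \<omega> \<Delta> \<and> (\<lambda>n t. b n t * a n t - 1) \<in> J2 \<omega> \<Delta>)"

definition q_real_rank_zero :: "nat filter \<Rightarrow> 'a::topological_space measure set \<Rightarrow> bool" where
  "q_real_rank_zero \<omega> \<Delta> \<longleftrightarrow>
     (\<forall>x\<in>linf_CX. q_selfadjoint \<omega> \<Delta> x \<longrightarrow>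
        (\<forall>\<epsilon>>0. \<exists>y\<in>linf_CX. q_selfadjoint \<omega> \<Delta> y \<and> q_invertible \<omega> \<Delta> y \<and>
            q_norm \<omega> \<Delta> (\<lambda>n t. x n t - y n t) < \<epsilon>))"

definition q_sa_inv_dense_norm2 :: "nat filter \<Rightarrow> 'a::topological_space measure set \<Rightarrow> bool" where
  "q_sa_inv_dense_norm2 \<omega> \<Delta> \<longleftrightarrow>
     (\<forall>x\<in>linf_CX. q_selfadjoint \<omega> \<Delta> x \<longrightarrow>
        (\<forall>\<epsilon>>0. \<exists>y\<in>linf_CX. q_selfadjoint \<omega> \<Delta> y \<and> q_invertible \<omega> \<Delta> y \<and>
            norm2 \<omega> \<Delta> (\<lambda>n t. x n t - y n t) < \<epsilon>))"

end

theory Submission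
  imports Defs
begin


lemma fu_nbot: "free_ultrafilter \<omega> \<Longrightarrow> \<omega> \<noteq> bot"
  by (simp add: free_ultrafilter_def)

lemma ultra_lim:
  fixes f :: "nat \<Rightarrow> ennreal"
  assumes "free_ultrafilter \<omega>"
  shows "(f \<longlongrightarrow> Limsup \<omega> f) \<omega>"
proof (rule order_tendstoI)
  fix a assume a: "a < Limsup \<omega> f"
  show "eventually (\<lambda>n. a < f n) \<omega>"
  proof (rule ccontr)
    assume "\<not> eventually (\<lambda>n. a < f n) \<omega>"
    then have "eventually (\<lambda>n. \<not> a < f n) \<omega>" using assms unfolding free_ultrafilter_def by blast
    then have "eventually (\<lambda>n. f n \<le> a) \<omega>" by (simp add: not_less)
    then have "Limsup \<omega> f \<le> a" by (rule Limsup_bounded)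
    with a show False by simp
  qed
next
  fix a assume "Limsup \<omega> f < a"
  then show "eventually (\<lambda>n. f n < a) \<omega>" by (rule Limsup_lessD)
qed

lemma norm2_lim:
  assumes "free_ultrafilter \<omega>"
  shows "((\<lambda>n. tau_sup2 \<Delta> (a n)) \<longlongrightarrow> norm2 \<omega> \<Delta> a) \<omega>"
proof -
  have "((\<lambda>n. tau_sup2 \<Delta> (a n)) \<longlongrightarrow> Limsup \<omega> (\<lambda>n. tau_sup2 \<Delta> (a n))) \<omega>"
    using ultra_lim[OF assms] .
  moreover have "\<omega> \<noteq> bot" using fu_nbot[OF assms] .
  ultimately show ?thesis unfolding norm2_def by (simp add: tendsto_Lim)
qed

lemma meas_sq:
  fixes g :: "'a::metric_space \<Rightarrow> complex"
  assumes "borel_prob \<tau>" "continuous_on UNIV g"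
  shows "(\<lambda>t. ennreal ((cmod (g t))\<^sup>2)) \<in> borel_measurable \<tau>"
proof -
  have h: "(\<lambda>t. (cmod (g t))\<^sup>2) \<in> borel_measurable borel"
    by (intro borel_measurable_continuous_onI continuous_intros assms(2))
  have "(\<lambda>t. ennreal ((cmod (g t))\<^sup>2)) \<in> borel_measurable borel"
    using measurable_compose[OF h measurable_ennreal] by (simp add: o_def)
  moreover have "sets \<tau> = sets borel" using assms(1) by (simp add: borel_prob_def)
  ultimately show ?thesis using measurable_cong_sets[of \<tau> borel] by simp
qed

lemma tau_bound3:
  fixes f g1 g2 g3 :: "'a::metric_space \<Rightarrow> complex"
  assumes P: "\<forall>\<mu>\<in>\<Delta>. borel_prob \<mu>"
    and c: "continuous_on UNIV g1" "continuous_on UNIV g2" "continuous_on UNIV g3"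
    and nn: "a \<ge> 0" "b \<ge> 0" "c \<ge> 0"
    and pt: "\<And>t. (cmod (f t))\<^sup>2 \<le> a * (cmod (g1 t))\<^sup>2 + b * (cmod (g2 t))\<^sup>2 + c * (cmod (g3 t))\<^sup>2"
  shows "tau_sup2 \<Delta> f \<le> ennreal a * tau_sup2 \<Delta> g1 + ennreal b * tau_sup2 \<Delta> g2 + ennreal c * tau_sup2 \<Delta> g3"
  unfolding tau_sup2_def
proof (rule SUP_least)
  fix \<tau> assume t: "\<tau> \<in> \<Delta>"
  then have bp: "borel_prob \<tau>" using P by auto
  have m1: "(\<lambda>t. ennreal ((cmod (g1 t))\<^sup>2)) \<in> borel_measurable \<tau>" by (rule meas_sq[OF bp c(1)])
  have m2: "(\<lambda>t. ennreal ((cmod (g2 t))\<^sup>2)) \<in> borel_measurable \<tau>" by (rule meas_sq[OF bp c(2)])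
  have m3: "(\<lambda>t. ennreal ((cmod (g3 t))\<^sup>2)) \<in> borel_measurable \<tau>" by (rule meas_sq[OF bp c(3)])
  have "(\<integral>\<^sup>+ t. ennreal ((cmod (f t))\<^sup>2) \<partial>\<tau>) \<le>
     (\<integral>\<^sup>+ t. (ennreal a * ennreal ((cmod (g1 t))\<^sup>2) + ennreal b * ennreal ((cmod (g2 t))\<^sup>2)) + ennreal c * ennreal ((cmod (g3 t))\<^sup>2) \<partial>\<tau>)"
  proof (rule nn_integral_mono)
    fix t
    have "ennreal ((cmod (f t))\<^sup>2) \<le> ennreal (a * (cmod (g1 t))\<^sup>2 + b * (cmod (g2 t))\<^sup>2 + c * (cmod (g3 t))\<^sup>2)"
      using pt by (rule ennreal_leI)
    also have "\<dots> = (ennreal a * ennreal ((cmod (g1 t))\<^sup>2) + ennreal b * ennreal ((cmod (g2 t))\<^sup>2)) + ennreal c * ennreal ((cmod (g3 t))\<^sup>2)"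
      using nn by (simp add: ennreal_plus[symmetric] ennreal_mult[symmetric] del: ennreal_plus)
    finally show "ennreal ((cmod (f t))\<^sup>2) \<le> (ennreal a * ennreal ((cmod (g1 t))\<^sup>2) + ennreal b * ennreal ((cmod (g2 t))\<^sup>2)) + ennreal c * ennreal ((cmod (g3 t))\<^sup>2)" .
  qed
  also have "\<dots> = ennreal a * (\<integral>\<^sup>+ t. ennreal ((cmod (g1 t))\<^sup>2) \<partial>\<tau>) + ennreal b * (\<integral>\<^sup>+ t. ennreal ((cmod (g2 t))\<^sup>2) \<partial>\<tau>) + ennreal c * (\<integral>\<^sup>+ t. ennreal ((cmod (g3 t))\<^sup>2) \<partial>\<tau>)"
    using m1 m2 m3 by (simp add: nn_integral_add nn_integral_cmult)
  also have "\<dots> \<le> ennreal a * tau_sup2 \<Delta> g1 + ennreal b * tau_sup2 \<Delta> g2 + ennreal c * tau_sup2 \<Delta> g3"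
    unfolding tau_sup2_def
    by (intro add_mono mult_left_mono SUP_upper t) auto
  finally show "(\<integral>\<^sup>+ t. ennreal ((cmod (f t))\<^sup>2) \<partial>\<tau>) \<le> ennreal a * (SUP \<tau>\<in>\<Delta>. \<integral>\<^sup>+ t. ennreal ((cmod (g1 t))\<^sup>2) \<partial>\<tau>) + ennreal b * (SUP \<tau>\<in>\<Delta>. \<integral>\<^sup>+ t. ennreal ((cmod (g2 t))\<^sup>2) \<partial>\<tau>) + ennreal c * (SUP \<tau>\<in>\<Delta>. \<integral>\<^sup>+ t. ennreal ((cmod (g3 t))\<^sup>2) \<partial>\<tau>)"
    unfolding tau_sup2_def .
qed

lemma tau_const:
  assumes P: "\<forall>\<mu>\<in>\<Delta>. borel_prob \<mu>"
  shows "tau_sup2 \<Delta> (\<lambda>t::'a::metric_space. complex_of_real d) \<le> ennreal (d\<^sup>2)"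
  unfolding tau_sup2_def
proof (rule SUP_least)
  fix \<tau> assume "\<tau> \<in> \<Delta>"
  then have "prob_space \<tau>" using P by (auto simp: borel_prob_def)
  then show "(\<integral>\<^sup>+ t. ennreal ((cmod (complex_of_real d))\<^sup>2) \<partial>\<tau>) \<le> ennreal (d\<^sup>2)"
    by (simp add: prob_space.emeasure_space_1)
qed


lemma sup_norm_ge:
  assumes "\<forall>n t. cmod (f n t) \<le> B"
  shows "cmod (f n t) \<le> sup_norm f"
  unfolding sup_norm_def
proof -
  have "cmod (f (fst (n,t)) (snd (n,t))) \<le> (SUP p\<in>UNIV. cmod (f (fst p) (snd p)))"
    by (rule cSUP_upper) (use assms in \<open>auto intro!: bdd_aboveI[where M=B]\<close>)
  then show "cmod (f n t) \<le> (SUP p\<in>UNIV. cmod (f (fst p) (snd p)))" by simp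
qed

lemma sup_norm_le:
  assumes "\<And>n t. cmod (f n t) \<le> c"
  shows "sup_norm f \<le> c"
  unfolding sup_norm_def by (rule cSUP_least) (use assms in auto)

lemma linf_bound: "f \<in> linf_CX \<Longrightarrow> \<exists>B. \<forall>n t. cmod (f n t) \<le> B"
  by (simp add: linf_CX_def)

lemma linf_cont: "f \<in> linf_CX \<Longrightarrow> continuous_on UNIV (f n)"
  by (simp add: linf_CX_def)

lemma J2_linf: "f \<in> J2 \<omega> \<Delta> \<Longrightarrow> f \<in> linf_CX"
  by (simp add: J2_def)

lemma J2_tendsto: "f \<in> J2 \<omega> \<Delta> \<Longrightarrow> ((\<lambda>n. tau_sup2 \<Delta> (f n)) \<longlongrightarrow> 0) \<omega>"
  by (simp add: J2_def)

lemma J2_I: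
  assumes "f \<in> linf_CX" "\<And>e. e > 0 \<Longrightarrow> eventually (\<lambda>n. tau_sup2 \<Delta> (f n) < e) \<omega>"
  shows "f \<in> J2 \<omega> \<Delta>"
  unfolding J2_def
proof (intro CollectI conjI assms(1) order_tendstoI)
  fix a :: ennreal assume "a < 0" then show "eventually (\<lambda>n. a < tau_sup2 \<Delta> (f n)) \<omega>" by simp
next
  fix a :: ennreal assume "0 < a" then show "eventually (\<lambda>n. tau_sup2 \<Delta> (f n) < a) \<omega>" by (rule assms(2))
qed

lemma J2_dom:
  assumes "f \<in> linf_CX" "g \<in> J2 \<omega> \<Delta>" "\<And>n. tau_sup2 \<Delta> (f n) \<le> ennreal c * tau_sup2 \<Delta> (g n)"
  shows "f \<in> J2 \<omega> \<Delta>"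
  unfolding J2_def
proof (intro CollectI conjI assms(1))
  have "((\<lambda>n. ennreal c * tau_sup2 \<Delta> (g n)) \<longlongrightarrow> ennreal c * 0) \<omega>"
    by (rule ennreal_tendsto_cmult) (use J2_tendsto[OF assms(2)] in auto)
  then have "((\<lambda>n. ennreal c * tau_sup2 \<Delta> (g n)) \<longlongrightarrow> 0) \<omega>" by simp
  note lim = this
  show "((\<lambda>n. tau_sup2 \<Delta> (f n)) \<longlongrightarrow> 0) \<omega>"
    by (rule tendsto_sandwich[OF _ _ tendsto_const lim]) (use assms(3) in auto)
qed

lemma zero_J2: "(\<lambda>n t. 0) \<in> J2 \<omega> \<Delta>"
proof -
  have "(\<Squnion>x\<in>\<Delta>. 0::ennreal) = 0" by (cases "\<Delta> = {}") (auto simp: bot_ennreal)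
  then show ?thesis unfolding J2_def linf_CX_def tau_sup2_def by auto
qed

lemma exists_pos_real:
  fixes \<epsilon> :: ennreal
  assumes "\<epsilon> > 0"
  obtains r where "r > 0" "ennreal r < \<epsilon>"
proof -
  obtain z where z: "0 < z" "z < \<epsilon>" using dense[OF assms] by blast
  then have "z < top" using top.not_eq_extremum by fastforce
  then obtain r where "z = ennreal r" "r \<ge> 0" by (cases z) auto
  with z show ?thesis using that by auto
qed

lemma diag:
  fixes M :: "nat \<Rightarrow> nat \<Rightarrow> ennreal"
  assumes fu: "free_ultrafilter \<omega>"
    and ev: "\<And>k. eventually (\<lambda>n. M k n \<le> ennreal (1 / Suc k)) \<omega>"
  shows "\<exists>kk. \<forall>e>0. eventually (\<lambda>n. M (kk n) n < e) \<omega>"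
proof -
  define P where "P n k \<longleftrightarrow> k \<le> n \<and> (\<forall>i\<le>k. M i n \<le> ennreal (1 / Suc i))" for n k
  define kk where "kk n = (GREATEST k. P n k)" for n
  have "\<forall>e>0. eventually (\<lambda>n. M (kk n) n < e) \<omega>"
  proof (intro allI impI)
    fix e :: ennreal assume "e > 0"
    then obtain r where r: "r > 0" "ennreal r < e" using exists_pos_real by blast
    obtain K where K: "inverse (real (Suc K)) < r" using reals_Archimedean[OF r(1)] by blast
    have e1: "eventually (\<lambda>n. \<forall>i\<in>{..K}. M i n \<le> ennreal (1 / Suc i)) \<omega>"
      by (rule eventually_ball_finite) (use ev in auto)
    have e2: "eventually (\<lambda>n. \<forall>m\<in>{..<K}. n \<noteq> m) \<omega>"
      by (rule eventually_ball_finite) (use fu in \<open>auto simp: free_ultrafilter_def\<close>)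
    show "eventually (\<lambda>n. M (kk n) n < e) \<omega>"
      using e1 e2
    proof eventually_elim
      case (elim n)
      have "K \<le> n"
      proof (rule ccontr)
        assume "\<not> K \<le> n" then have "n \<in> {..<K}" by simp
        with elim(2) show False by blast
      qed
      then have PK: "P n K" using elim(1) by (auto simp: P_def)
      have bnd: "\<And>y. P n y \<Longrightarrow> y \<le> n" by (simp add: P_def)
      have "P n (kk n)" unfolding kk_def by (rule GreatestI_nat[where P="P n", OF PK bnd])
      then have a: "M (kk n) n \<le> ennreal (1 / Suc (kk n))" by (simp add: P_def)
      have "K \<le> kk n" unfolding kk_def by (rule Greatest_le_nat[where P="P n", OF PK bnd])
      then have "1 / real (Suc (kk n)) \<le> 1 / real (Suc K)"
        by (intro divide_left_mono) auto
      also have "\<dots> < r" using K by (simp add: field_simps)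
      finally have "ennreal (1 / Suc (kk n)) < ennreal r"
        using r(1) by (simp add: ennreal_lessI)
      with a r(2) show ?case by (meson order.strict_trans1 order.strict_trans)
    qed
  qed
  then show ?thesis by blast
qed



lemma sq_ge1:
  fixes a d :: real
  assumes "d > 0" "a \<ge> d"
  shows "1 \<le> (1 / d\<^sup>2) * a\<^sup>2"
proof -
  have "d\<^sup>2 \<le> a\<^sup>2" using assms by (intro power_mono) auto
  then show ?thesis using assms by (simp add: field_simps)
qed

lemma pt_bound:
  fixes X Yc Bc :: complex and e B :: real
  assumes e: "e > 0" and B: "B > 0" and Bc: "cmod Bc \<le> B"
  defines "\<delta> \<equiv> 1 / (4 * B)"
  defines "r \<equiv> Re X + e * max (-1) (min 1 (Re Yc / \<delta>))"
  defines "c \<equiv> e / 2"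
  shows "(r * (r / max (r\<^sup>2) (c\<^sup>2)) - 1)\<^sup>2 \<le>
    4 * (cmod (Yc * Bc - 1))\<^sup>2 + (1 / (2 * \<delta>)\<^sup>2) * (cmod (Yc - cnj Yc))\<^sup>2 + (1 / (e/2)\<^sup>2) * (cmod (X - Yc))\<^sup>2"
    (is "?L \<le> ?R")
proof -
  have dpos: "\<delta> > 0" unfolding \<delta>_def using B by simp
  have cpos: "c > 0" unfolding c_def using e by simp
  have nn: "0 \<le> 4 * (cmod (Yc * Bc - 1))\<^sup>2" "0 \<le> (1 / (2 * \<delta>)\<^sup>2) * (cmod (Yc - cnj Yc))\<^sup>2"
     "0 \<le> (1 / (e/2)\<^sup>2) * (cmod (X - Yc))\<^sup>2" by simp_all
  have R0: "0 \<le> ?R" by simp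
  show ?thesis
  proof (cases "\<bar>r\<bar> \<ge> c")
    case True
    then have "c\<^sup>2 \<le> r\<^sup>2" using cpos by (metis abs_le_square_iff abs_of_pos) 
    then have "max (r\<^sup>2) (c\<^sup>2) = r\<^sup>2" by simp
    moreover have "r \<noteq> 0" using True cpos by auto
    ultimately have "r * (r / max (r\<^sup>2) (c\<^sup>2)) - 1 = 0" by (simp add: power2_eq_square)
    then have "?L = 0" by (simp only: power2_eq_square mult_zero_left)
    then show ?thesis using R0 by linarith
  next
    case False
    then have rc: "\<bar>r\<bar> < c" by simp
    have rc2: "- c < r" "r < c" using rc by (simp_all add: abs_less_iff)
    have "r\<^sup>2 \<le> c\<^sup>2" using rc by (metis abs_le_square_iff abs_of_pos cpos less_imp_le)
    then have m: "max (r\<^sup>2) (c\<^sup>2) = c\<^sup>2" by simp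
    have q0: "0 \<le> r\<^sup>2 / c\<^sup>2" by simp
    have q1: "r\<^sup>2 / c\<^sup>2 \<le> 1" using \<open>r\<^sup>2 \<le> c\<^sup>2\<close> cpos by simp
    have "?L = (1 - r\<^sup>2 / c\<^sup>2)\<^sup>2" using m by (simp add: power2_eq_square algebra_simps)
    also have "\<dots> \<le> 1" using q0 q1 by (intro power_le_one) auto
    finally have L1: "?L \<le> 1" .
    have "1 \<le> ?R"
    proof (cases "\<bar>Re Yc\<bar> \<ge> \<delta>")
      case True
      have "1 \<le> (1 / (e/2)\<^sup>2) * (cmod (X - Yc))\<^sup>2"
      proof (rule sq_ge1)
        show "0 < e / 2" using e by simp
        show "e / 2 \<le> cmod (X - Yc)"
        proof (cases "Re Yc \<ge> \<delta>")
          case True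
          then have "Re Yc / \<delta> \<ge> 1" using dpos by simp
          then have "r = Re X + e" unfolding r_def by simp
          then have "Re X < - e/2" using rc2 unfolding c_def by linarith
          then have "e/2 \<le> \<bar>Re (X - Yc)\<bar>" using True dpos by (simp add: abs_if)
          then show ?thesis using abs_Re_le_cmod order_trans by blast
        next
          case False
          then have "Re Yc \<le> - \<delta>" using \<open>\<bar>Re Yc\<bar> \<ge> \<delta>\<close> by auto
          then have "Re Yc / \<delta> \<le> -1" using dpos by (simp add: field_simps)
          then have "r = Re X - e" unfolding r_def by simp
          then have "Re X > e/2" using rc2 unfolding c_def by linarith
          then have "e/2 \<le> \<bar>Re (X - Yc)\<bar>" using \<open>Re Yc \<le> - \<delta>\<close> dpos by (simp add: abs_if)
          then show ?thesis using abs_Re_le_cmod order_trans by blast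
        qed
      qed
      then show ?thesis using nn by linarith
    next
      case F1: False
      show ?thesis
      proof (cases "\<bar>Im Yc\<bar> \<ge> \<delta>")
        case True
        have "cmod (Yc - cnj Yc) = 2 * \<bar>Im Yc\<bar>"
          by (simp add: complex_diff_cnj norm_mult)
        then have "2 * \<delta> \<le> cmod (Yc - cnj Yc)" using True by simp
        then have "1 \<le> (1 / (2 * \<delta>)\<^sup>2) * (cmod (Yc - cnj Yc))\<^sup>2"
          by (intro sq_ge1) (use dpos in auto)
        then show ?thesis using nn by linarith
      next
        case False
        have "cmod Yc \<le> \<bar>Re Yc\<bar> + \<bar>Im Yc\<bar>" by (rule cmod_le)
        also have "\<dots> < 2 * \<delta>" using F1 False by simp
        finally have y: "cmod Yc < 2 * \<delta>" .
        have "cmod (Yc * Bc) = cmod Yc * cmod Bc" by (simp add: norm_mult)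
        also have "\<dots> \<le> cmod Yc * B" using Bc by (simp add: mult_left_mono)
        also have "\<dots> \<le> 2 * \<delta> * B" using y B by simp
        also have "\<dots> = 1/2" unfolding \<delta>_def using B by simp
        finally have "cmod (Yc * Bc) \<le> 1/2" .
        moreover have "1 - cmod (Yc * Bc) \<le> cmod (Yc * Bc - 1)"
          using norm_triangle_ineq3[of 1 "Yc * Bc"] by (simp add: norm_minus_commute)
        ultimately have "1/2 \<le> cmod (Yc * Bc - 1)" by simp
        then have "(1/2)\<^sup>2 \<le> (cmod (Yc * Bc - 1))\<^sup>2"
          by (intro power_mono) auto
        then have "1 \<le> 4 * (cmod (Yc * Bc - 1))\<^sup>2" by (simp add: power2_eq_square)
        then show ?thesis using nn by linarith
      qed
    qed
    then show ?thesis using L1 by simp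
  qed
qed


lemma ennreal_comb:
  fixes T1 T2 T3 :: ennreal and p q r u v w :: real
  assumes "0 \<le> p" "0 \<le> q" "0 \<le> r" "0 \<le> u" "0 \<le> v" "0 \<le> w"
    "T1 \<le> ennreal u" "T2 \<le> ennreal v" "T3 \<le> ennreal w"
  shows "ennreal p * T1 + ennreal q * T2 + ennreal r * T3 \<le> ennreal (p * u + q * v + r * w)"
proof -
  have "ennreal p * T1 + ennreal q * T2 + ennreal r * T3 \<le>
        ennreal p * ennreal u + ennreal q * ennreal v + ennreal r * ennreal w"
    using assms by (intro add_mono mult_left_mono) auto
  also have "\<dots> = ennreal (p * u + q * v + r * w)"
    using assms by (simp add: ennreal_mult ennreal_plus)
  finally show ?thesis .
qed

lemma step:
  fixes x y b :: "nat \<Rightarrow> 'a::metric_space \<Rightarrow> complex"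
  assumes P: "\<forall>\<mu>\<in>\<Delta>. borel_prob \<mu>"
    and x: "x \<in> linf_CX" and y: "y \<in> linf_CX" and b: "b \<in> linf_CX"
    and ysa: "(\<lambda>n t. y n t - cnj (y n t)) \<in> J2 \<omega> \<Delta>"
    and yb: "(\<lambda>n t. y n t * b n t - 1) \<in> J2 \<omega> \<Delta>"
    and e: "e > 0" and \<eta>: "\<eta> > 0"
    and xy: "eventually (\<lambda>n. tau_sup2 \<Delta> (\<lambda>t. x n t - y n t) \<le> ennreal ((e/2)\<^sup>2 * (\<eta>/3))) \<omega>"
  shows "\<exists>Y Bv. (\<forall>n. continuous_on UNIV (Y n) \<and> continuous_on UNIV (Bv n)) \<and>
     (\<forall>n t. Im (Y n t) = 0 \<and> \<bar>Re (Y n t) - Re (x n t)\<bar> \<le> e \<and> cmod (Bv n t) \<le> 2 / e) \<and>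
     eventually (\<lambda>n. tau_sup2 \<Delta> (\<lambda>t. Y n t * Bv n t - 1) \<le> ennreal \<eta>) \<omega>"
proof -
  obtain B0 where B0: "\<forall>n t. cmod (b n t) \<le> B0" using linf_bound[OF b] by blast
  define B where "B = max 1 B0"
  have Bpos: "B > 0" unfolding B_def by simp
  have Bb: "\<And>n t. cmod (b n t) \<le> B" using B0 unfolding B_def by (meson max.coboundedI2)
  define \<delta> where "\<delta> = 1 / (4 * B)"
  have dpos: "\<delta> > 0" unfolding \<delta>_def using Bpos by simp
  define c where "c = e / 2"
  have cpos: "c > 0" unfolding c_def using e by simp
  define R where "R n t = Re (x n t) + e * max (-1) (min 1 (Re (y n t) / \<delta>))" for n t
  define Y where "Y n t = complex_of_real (R n t)" for n t
  define Bv where "Bv n t = complex_of_real (R n t / max ((R n t)\<^sup>2) (c\<^sup>2))" for n t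
  have cx: "\<And>n. continuous_on UNIV (x n)" using linf_cont[OF x] .
  have cy: "\<And>n. continuous_on UNIV (y n)" using linf_cont[OF y] .
  have cb: "\<And>n. continuous_on UNIV (b n)" using linf_cont[OF b] .
  have cR: "continuous_on UNIV (R n)" for n
    unfolding R_def[abs_def] by (intro continuous_intros cx cy) (use dpos in auto)
  have mpos: "max ((R n t)\<^sup>2) (c\<^sup>2) > 0" for n t using cpos by (simp add: less_max_iff_disj)
  have cont: "continuous_on UNIV (Y n) \<and> continuous_on UNIV (Bv n)" for n
  proof
    show "continuous_on UNIV (Y n)" unfolding Y_def[abs_def] by (intro continuous_intros cR)
    show "continuous_on UNIV (Bv n)" unfolding Bv_def[abs_def]
      by (intro continuous_intros cR) (use mpos in \<open>metis less_irrefl\<close>)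
  qed
  have props: "Im (Y n t) = 0 \<and> \<bar>Re (Y n t) - Re (x n t)\<bar> \<le> e \<and> cmod (Bv n t) \<le> 2 / e" for n t
  proof (intro conjI)
    show "Im (Y n t) = 0" by (simp add: Y_def)
    have "\<bar>max (-1) (min 1 (Re (y n t) / \<delta>))\<bar> \<le> (1::real)" by simp
    then have "\<bar>e * max (-1) (min 1 (Re (y n t) / \<delta>))\<bar> \<le> e" using e by (simp add: abs_mult)
    then show "\<bar>Re (Y n t) - Re (x n t)\<bar> \<le> e" by (simp add: Y_def R_def)
    let ?r = "R n t" let ?m = "max ((R n t)\<^sup>2) (c\<^sup>2)"
    have "\<bar>?r\<bar> * c \<le> ?m"
    proof (cases "\<bar>?r\<bar> \<ge> c")
      case True
      then have "\<bar>?r\<bar> * c \<le> \<bar>?r\<bar> * \<bar>?r\<bar>" by (intro mult_left_mono) auto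
      also have "\<dots> = ?r\<^sup>2" by (simp add: power2_eq_square abs_mult_self_eq)
      finally show ?thesis by simp
    next
      case False
      then have "\<bar>?r\<bar> * c \<le> c * c" using cpos by (intro mult_right_mono) auto
      also have "\<dots> = c\<^sup>2" by (simp add: power2_eq_square)
      finally show ?thesis by simp
    qed
    then have "\<bar>?r\<bar> / ?m \<le> 1 / c" using cpos mpos[of n t] by (simp add: field_simps)
    moreover have "cmod (Bv n t) = \<bar>?r / ?m\<bar>" by (simp only: Bv_def norm_of_real)
    moreover have "\<bar>?r / ?m\<bar> = \<bar>?r\<bar> / ?m" by (simp only: abs_divide abs_of_pos[OF mpos[of n t]])
    moreover have "1 / c = 2 / e" unfolding c_def by simp
    ultimately show "cmod (Bv n t) \<le> 2 / e" by linarith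
  qed
  have Tb: "tau_sup2 \<Delta> (\<lambda>t. Y n t * Bv n t - 1) \<le>
      ennreal 4 * tau_sup2 \<Delta> (\<lambda>t. y n t * b n t - 1) + ennreal (1 / (2 * \<delta>)\<^sup>2) * tau_sup2 \<Delta> (\<lambda>t. y n t - cnj (y n t))
      + ennreal (1 / (e/2)\<^sup>2) * tau_sup2 \<Delta> (\<lambda>t. x n t - y n t)" for n
  proof (rule tau_bound3[OF P])
    show "continuous_on UNIV (\<lambda>t. y n t * b n t - 1)" by (intro continuous_intros cy cb)
    show "continuous_on UNIV (\<lambda>t. y n t - cnj (y n t))" by (intro continuous_intros cy)
    show "continuous_on UNIV (\<lambda>t. x n t - y n t)" by (intro continuous_intros cx cy)
    show "(0::real) \<le> 4" "0 \<le> 1 / (2 * \<delta>)\<^sup>2" "0 \<le> 1 / (e/2)\<^sup>2" by simp_all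
    fix t
    have "Y n t * Bv n t - 1 = complex_of_real (R n t * (R n t / max ((R n t)\<^sup>2) (c\<^sup>2)) - 1)"
      by (simp add: Y_def Bv_def)
    then have "(cmod (Y n t * Bv n t - 1))\<^sup>2 = (R n t * (R n t / max ((R n t)\<^sup>2) (c\<^sup>2)) - 1)\<^sup>2"
      by (simp only: norm_of_real power2_abs)
    also have "\<dots> \<le> 4 * (cmod (y n t * b n t - 1))\<^sup>2 + (1 / (2 * \<delta>)\<^sup>2) * (cmod (y n t - cnj (y n t)))\<^sup>2 + (1 / (e/2)\<^sup>2) * (cmod (x n t - y n t))\<^sup>2"
      unfolding R_def c_def \<delta>_def by (rule pt_bound[OF e Bpos Bb])
    finally show "(cmod (Y n t * Bv n t - 1))\<^sup>2 \<le> 4 * (cmod (y n t * b n t - 1))\<^sup>2 + (1 / (2 * \<delta>)\<^sup>2) * (cmod (y n t - cnj (y n t)))\<^sup>2 + (1 / (e/2)\<^sup>2) * (cmod (x n t - y n t))\<^sup>2" .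
  qed
  have ev1: "eventually (\<lambda>n. tau_sup2 \<Delta> (\<lambda>t. y n t * b n t - 1) \<le> ennreal (\<eta>/12)) \<omega>"
    using order_tendstoD(2)[OF J2_tendsto[OF yb], of "ennreal (\<eta>/12)"] \<eta>
    by (auto elim: eventually_mono)
  have ev2: "eventually (\<lambda>n. tau_sup2 \<Delta> (\<lambda>t. y n t - cnj (y n t)) \<le> ennreal ((2 * \<delta>)\<^sup>2 * (\<eta>/3))) \<omega>"
    using order_tendstoD(2)[OF J2_tendsto[OF ysa], of "ennreal ((2 * \<delta>)\<^sup>2 * (\<eta>/3))"] \<eta> dpos
    by (auto elim: eventually_mono)
  have ev: "eventually (\<lambda>n. tau_sup2 \<Delta> (\<lambda>t. Y n t * Bv n t - 1) \<le> ennreal \<eta>) \<omega>"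
  proof -
  have ev3: "eventually (\<lambda>n. tau_sup2 \<Delta> (\<lambda>t. y n t * b n t - 1) \<le> ennreal (\<eta>/12) \<and>
     tau_sup2 \<Delta> (\<lambda>t. y n t - cnj (y n t)) \<le> ennreal ((2 * \<delta>)\<^sup>2 * (\<eta>/3)) \<and>
     tau_sup2 \<Delta> (\<lambda>t. x n t - y n t) \<le> ennreal ((e/2)\<^sup>2 * (\<eta>/3))) \<omega>"
    by (fact eventually_conj[OF ev1 eventually_conj[OF ev2 xy]])
  show ?thesis
  proof (rule eventually_mono[OF ev3])
    fix n assume H: "tau_sup2 \<Delta> (\<lambda>t. y n t * b n t - 1) \<le> ennreal (\<eta>/12) \<and>
     tau_sup2 \<Delta> (\<lambda>t. y n t - cnj (y n t)) \<le> ennreal ((2 * \<delta>)\<^sup>2 * (\<eta>/3)) \<and>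
     tau_sup2 \<Delta> (\<lambda>t. x n t - y n t) \<le> ennreal ((e/2)\<^sup>2 * (\<eta>/3))"
    note elim = conjunct1[OF H] conjunct1[OF conjunct2[OF H]] conjunct2[OF conjunct2[OF H]]
    have T: "tau_sup2 \<Delta> (\<lambda>t. Y n t * Bv n t - 1) \<le>
      ennreal 4 * tau_sup2 \<Delta> (\<lambda>t. y n t * b n t - 1) + ennreal (1 / (2 * \<delta>)\<^sup>2) * tau_sup2 \<Delta> (\<lambda>t. y n t - cnj (y n t))
      + ennreal (1 / (e/2)\<^sup>2) * tau_sup2 \<Delta> (\<lambda>t. x n t - y n t)" by (rule Tb)
    have C: "ennreal 4 * tau_sup2 \<Delta> (\<lambda>t. y n t * b n t - 1) + ennreal (1 / (2 * \<delta>)\<^sup>2) * tau_sup2 \<Delta> (\<lambda>t. y n t - cnj (y n t))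
      + ennreal (1 / (e/2)\<^sup>2) * tau_sup2 \<Delta> (\<lambda>t. x n t - y n t) \<le> ennreal (4 * (\<eta>/12) + (1 / (2 * \<delta>)\<^sup>2) * ((2 * \<delta>)\<^sup>2 * (\<eta>/3)) + (1 / (e/2)\<^sup>2) * ((e/2)\<^sup>2 * (\<eta>/3)))"
      by (rule ennreal_comb[where p=4 and q="1 / (2 * \<delta>)\<^sup>2" and r="1 / (e/2)\<^sup>2",
            OF _ _ _ _ _ _ elim(1) elim(2) elim(3)]) (use \<eta> in simp_all)
    have E: "4 * (\<eta>/12) + (1 / (2 * \<delta>)\<^sup>2) * ((2 * \<delta>)\<^sup>2 * (\<eta>/3)) + (1 / (e/2)\<^sup>2) * ((e/2)\<^sup>2 * (\<eta>/3)) = \<eta>"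
      using dpos e by (simp add: field_simps)
    show "tau_sup2 \<Delta> (\<lambda>t. Y n t * Bv n t - 1) \<le> ennreal \<eta>" using order_trans[OF T C] unfolding E .
  qed
  qed
  have all: "(\<forall>n. continuous_on UNIV (Y n) \<and> continuous_on UNIV (Bv n)) \<and>
     (\<forall>n t. Im (Y n t) = 0 \<and> \<bar>Re (Y n t) - Re (x n t)\<bar> \<le> e \<and> cmod (Bv n t) \<le> 2 / e) \<and>
     eventually (\<lambda>n. tau_sup2 \<Delta> (\<lambda>t. Y n t * Bv n t - 1) \<le> ennreal \<eta>) \<omega>"
    using cont props ev by blast
  show ?thesis
    apply (rule exI[where x=Y])
    apply (rule exI[where x=Bv])
    by (rule all)
qed



lemma linf_diff_bound:
  assumes "x \<in> linf_CX" "y \<in> linf_CX" "j \<in> linf_CX"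
  shows "\<exists>B. \<forall>n t. cmod (x n t - y n t + j n t) \<le> B"
proof -
  obtain B1 B2 B3 where "\<forall>n t. cmod (x n t) \<le> B1" "\<forall>n t. cmod (y n t) \<le> B2" "\<forall>n t. cmod (j n t) \<le> B3"
    using assms linf_bound by metis
  then have "\<forall>n t. cmod (x n t - y n t + j n t) \<le> B1 + B2 + B3"
    by (metis (no_types, lifting) add_mono norm_diff_ineq norm_triangle_ineq4 order_trans norm_triangle_ineq)
  then show ?thesis by blast
qed

lemma sq_tri:
  fixes a b d :: real
  assumes "0 \<le> a" "a \<le> d + b" "0 \<le> b" "0 \<le> d"
  shows "a\<^sup>2 \<le> 2 * d\<^sup>2 + 2 * b\<^sup>2"
proof -
  have "a\<^sup>2 \<le> (d + b)\<^sup>2" using assms by (intro power_mono) auto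
  also have "\<dots> \<le> 2 * d\<^sup>2 + 2 * b\<^sup>2" using sum_squares_ge_zero[of "d - b" 0]
    by (simp add: power2_eq_square algebra_simps)
  finally show ?thesis .
qed

lemma dir1:
  fixes \<omega> :: "nat filter" and \<Delta> :: "'a::metric_space measure set"
  assumes P: "\<forall>\<mu>\<in>\<Delta>. borel_prob \<mu>" and fu: "free_ultrafilter \<omega>"
    and RR: "q_real_rank_zero \<omega> \<Delta>"
  shows "q_sa_inv_dense_norm2 \<omega> \<Delta>"
  unfolding q_sa_inv_dense_norm2_def
proof (intro ballI impI allI)
  fix x :: "nat \<Rightarrow> 'a \<Rightarrow> complex" and \<epsilon> :: ennreal
  assume x: "x \<in> linf_CX" and sa: "q_selfadjoint \<omega> \<Delta> x" and \<epsilon>: "\<epsilon> > 0"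
  obtain r where r: "r > 0" "ennreal r < \<epsilon>" using exists_pos_real[OF \<epsilon>] by blast
  define d where "d = sqrt r / 2"
  have dpos: "d > 0" unfolding d_def using r by simp
  have d2: "d\<^sup>2 = r / 4" unfolding d_def using r by (simp add: power_divide)
  obtain y where y: "y \<in> linf_CX" "q_selfadjoint \<omega> \<Delta> y" "q_invertible \<omega> \<Delta> y"
    and qn: "q_norm \<omega> \<Delta> (\<lambda>n t. x n t - y n t) < d"
    using RR x sa dpos unfolding q_real_rank_zero_def by blast
  let ?S = "{sup_norm (\<lambda>n t. (x n t - y n t) + j n t) | j. j \<in> J2 \<omega> \<Delta>}"
  have Sne: "?S \<noteq> {}" using zero_J2 by blast
  obtain s where "s \<in> ?S" "s < d" using cInf_lessD[OF Sne qn[unfolded q_norm_def]] by blast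
  then obtain j where j: "j \<in> J2 \<omega> \<Delta>" and sj: "sup_norm (\<lambda>n t. (x n t - y n t) + j n t) < d" by blast
  have jl: "j \<in> linf_CX" using J2_linf[OF j] .
  obtain Bs where Bs: "\<forall>n t. cmod (x n t - y n t + j n t) \<le> Bs" using linf_diff_bound[OF x y(1) jl] by blast
  have pt: "cmod (x n t - y n t) \<le> d + cmod (j n t)" for n t
  proof -
    have "cmod (x n t - y n t) \<le> cmod (x n t - y n t + j n t) + cmod (j n t)"
      using norm_triangle_ineq4[of "x n t - y n t + j n t" "j n t"] by simp
    also have "cmod (x n t - y n t + j n t) \<le> sup_norm (\<lambda>n t. (x n t - y n t) + j n t)"
      by (rule sup_norm_ge[OF Bs])
    finally show ?thesis using sj by simp
  qed
  have cj: "\<And>n. continuous_on UNIV (j n)" using linf_cont[OF jl] .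
  have Tb: "tau_sup2 \<Delta> (\<lambda>t. x n t - y n t) \<le> ennreal 2 * tau_sup2 \<Delta> (\<lambda>t. complex_of_real d)
     + ennreal 2 * tau_sup2 \<Delta> (j n) + ennreal 0 * tau_sup2 \<Delta> (\<lambda>t. complex_of_real 0)" for n
  proof (rule tau_bound3[OF P])
    show "continuous_on UNIV (\<lambda>t::'a. complex_of_real d)" by (intro continuous_intros)
    show "continuous_on UNIV (j n)" by (rule cj)
    show "continuous_on UNIV (\<lambda>t::'a. complex_of_real 0)" by (intro continuous_intros)
    show "(0::real) \<le> 2" "(0::real) \<le> 2" "(0::real) \<le> 0" by simp_all
    fix t
    have "(cmod (x n t - y n t))\<^sup>2 \<le> 2 * d\<^sup>2 + 2 * (cmod (j n t))\<^sup>2"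
      by (rule sq_tri) (use pt dpos in auto)
    then show "(cmod (x n t - y n t))\<^sup>2 \<le> 2 * (cmod (complex_of_real d))\<^sup>2 + 2 * (cmod (j n t))\<^sup>2 + 0 * (cmod (complex_of_real 0))\<^sup>2"
      using dpos by simp
  qed
  have evj: "eventually (\<lambda>n. tau_sup2 \<Delta> (j n) \<le> ennreal (d\<^sup>2)) \<omega>"
    using order_tendstoD(2)[OF J2_tendsto[OF j], of "ennreal (d\<^sup>2)"] dpos
    by (auto elim: eventually_mono)
  have ev: "eventually (\<lambda>n. tau_sup2 \<Delta> (\<lambda>t. x n t - y n t) \<le> ennreal r) \<omega>"
  proof (rule eventually_mono[OF evj])
    fix n assume h: "tau_sup2 \<Delta> (j n) \<le> ennreal (d\<^sup>2)"
    have "ennreal 2 * tau_sup2 \<Delta> (\<lambda>t. complex_of_real d) + ennreal 2 * tau_sup2 \<Delta> (j n) + ennreal 0 * tau_sup2 \<Delta> (\<lambda>t. complex_of_real 0)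
       \<le> ennreal (2 * d\<^sup>2 + 2 * d\<^sup>2 + 0 * 0\<^sup>2)"
      by (rule ennreal_comb[OF _ _ _ _ _ _ tau_const[OF P] h tau_const[OF P]]) simp_all
    also have "2 * d\<^sup>2 + 2 * d\<^sup>2 + 0 * 0\<^sup>2 = r" using d2 by simp
    finally show "tau_sup2 \<Delta> (\<lambda>t. x n t - y n t) \<le> ennreal r" using Tb[of n] by (meson order_trans)
  qed
  have "norm2 \<omega> \<Delta> (\<lambda>n t. x n t - y n t) \<le> ennreal r"
    by (rule tendsto_upperbound[OF norm2_lim[OF fu] ev]) (use fu_nbot[OF fu] in simp)
  then have "norm2 \<omega> \<Delta> (\<lambda>n t. x n t - y n t) < \<epsilon>" using r(2) by (rule le_less_trans)
  then show "\<exists>y\<in>linf_CX. q_selfadjoint \<omega> \<Delta> y \<and> q_invertible \<omega> \<Delta> y \<and> norm2 \<omega> \<Delta> (\<lambda>n t. x n t - y n t) < \<epsilon>"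
    using y by blast
qed


lemma re_minus_norm: "cmod (complex_of_real (Re z) - z) = \<bar>Im z\<bar>"
  by (simp add: norm_complex_def)

lemma cnj_minus_norm: "cmod (z - cnj z) = 2 * \<bar>Im z\<bar>"
  by (simp add: complex_diff_cnj norm_mult)

lemma q_norm_le:
  assumes "x \<in> linf_CX" "y \<in> linf_CX" "j \<in> J2 \<omega> \<Delta>"
  shows "q_norm \<omega> \<Delta> (\<lambda>n t. x n t - y n t) \<le> sup_norm (\<lambda>n t. (x n t - y n t) + j n t)"
  unfolding q_norm_def
proof (rule cInf_lower)
  show "sup_norm (\<lambda>n t. (x n t - y n t) + j n t) \<in> {sup_norm (\<lambda>n t. (x n t - y n t) + j n t) | j. j \<in> J2 \<omega> \<Delta>}"
    using assms(3) by blast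
  show "bdd_below {sup_norm (\<lambda>n t. (x n t - y n t) + j n t) | j. j \<in> J2 \<omega> \<Delta>}"
  proof (rule bdd_belowI[where m=0], clarify)
    fix j' assume j': "j' \<in> J2 \<omega> \<Delta>"
    obtain B where "\<forall>n t. cmod (x n t - y n t + j' n t) \<le> B"
      using linf_diff_bound[OF assms(1,2) J2_linf[OF j']] by blast
    then have "cmod (x 0 (undefined) - y 0 undefined + j' 0 undefined) \<le> sup_norm (\<lambda>n t. x n t - y n t + j' n t)"
      by (rule sup_norm_ge)
    then show "0 \<le> sup_norm (\<lambda>n t. x n t - y n t + j' n t)" by (meson norm_ge_zero order_trans)
  qed
qed

lemma dir2:
  fixes \<omega> :: "nat filter" and \<Delta> :: "'a::metric_space measure set"
  assumes P: "\<forall>\<mu>\<in>\<Delta>. borel_prob \<mu>" and fu: "free_ultrafilter \<omega>"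
    and D: "q_sa_inv_dense_norm2 \<omega> \<Delta>"
  shows "q_real_rank_zero \<omega> \<Delta>"
  unfolding q_real_rank_zero_def
proof (intro ballI impI allI)
  fix x :: "nat \<Rightarrow> 'a \<Rightarrow> complex" and \<epsilon> :: real
  assume x: "x \<in> linf_CX" and sa: "q_selfadjoint \<omega> \<Delta> x" and \<epsilon>: "\<epsilon> > 0"
  define e where "e = \<epsilon> / 2"
  have e: "e > 0" unfolding e_def using \<epsilon> by simp
  define Q where "Q k Yk Bk \<longleftrightarrow> (\<forall>n. continuous_on UNIV (Yk n) \<and> continuous_on UNIV (Bk n)) \<and>
     (\<forall>n t. Im (Yk n t) = 0 \<and> \<bar>Re (Yk n t) - Re (x n t)\<bar> \<le> e \<and> cmod (Bk n t) \<le> 2 / e) \<and>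
     eventually (\<lambda>n. tau_sup2 \<Delta> (\<lambda>t. Yk n t * Bk n t - 1) \<le> ennreal (1 / real (Suc k))) \<omega>"
    for k :: nat and Yk Bk :: "nat \<Rightarrow> 'a \<Rightarrow> complex"
  have exk: "\<exists>Yk Bk. Q k Yk Bk" for k
  proof -
    define \<eta> where "\<eta> = 1 / real (Suc k)"
    have \<eta>: "\<eta> > 0" unfolding \<eta>_def by simp
    have pos: "ennreal ((e/2)\<^sup>2 * (\<eta>/3)) > 0" using e \<eta> by simp
    obtain y where y: "y \<in> linf_CX" "q_selfadjoint \<omega> \<Delta> y" "q_invertible \<omega> \<Delta> y"
      and nm: "norm2 \<omega> \<Delta> (\<lambda>n t. x n t - y n t) < ennreal ((e/2)\<^sup>2 * (\<eta>/3))"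
      using D x sa pos unfolding q_sa_inv_dense_norm2_def by blast
    obtain b where b: "b \<in> linf_CX" "(\<lambda>n t. y n t * b n t - 1) \<in> J2 \<omega> \<Delta>"
      using y(3) unfolding q_invertible_def by blast
    have xy: "eventually (\<lambda>n. tau_sup2 \<Delta> (\<lambda>t. x n t - y n t) \<le> ennreal ((e/2)\<^sup>2 * (\<eta>/3))) \<omega>"
      using order_tendstoD(2)[OF norm2_lim[OF fu] nm] by (auto elim: eventually_mono)
    have ysa: "(\<lambda>n t. y n t - cnj (y n t)) \<in> J2 \<omega> \<Delta>" using y(2) unfolding q_selfadjoint_def .
    show ?thesis using step[OF P x y(1) b(1) ysa b(2) e \<eta> xy] unfolding Q_def \<eta>_def .
  qed
  have "\<exists>Y. \<forall>k. \<exists>Bk. Q k (Y k) Bk" by (rule choice) (use exk in blast)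
  then obtain Y where Y: "\<forall>k. \<exists>Bk. Q k (Y k) Bk" by blast
  have "\<exists>Bv. \<forall>k. Q k (Y k) (Bv k)" by (rule choice) (use Y in blast)
  then obtain Bv where QB: "\<And>k. Q k (Y k) (Bv k)" by blast
  have evk: "eventually (\<lambda>n. tau_sup2 \<Delta> (\<lambda>t. Y k n t * Bv k n t - 1) \<le> ennreal (1 / real (Suc k))) \<omega>" for k
    using QB[of k] unfolding Q_def by blast
  obtain kk where kk: "\<forall>e>0. eventually (\<lambda>n. tau_sup2 \<Delta> (\<lambda>t. Y (kk n) n t * Bv (kk n) n t - 1) < e) \<omega>"
    using diag[OF fu, of "\<lambda>k n. tau_sup2 \<Delta> (\<lambda>t. Y k n t * Bv k n t - 1)", OF evk] by blast
  define y' where "y' n = Y (kk n) n" for n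
  define b' where "b' n = Bv (kk n) n" for n
  have cy': "continuous_on UNIV (y' n)" and cb': "continuous_on UNIV (b' n)" for n
    using QB[of "kk n"] unfolding Q_def y'_def b'_def by blast+
  have im: "Im (y' n t) = 0" and re: "\<bar>Re (y' n t) - Re (x n t)\<bar> \<le> e" and bb: "cmod (b' n t) \<le> 2 / e" for n t
    using QB[of "kk n"] unfolding Q_def y'_def b'_def by blast+
  obtain Bx where Bx: "\<forall>n t. cmod (x n t) \<le> Bx" using linf_bound[OF x] by blast
  have yb: "cmod (y' n t) \<le> Bx + e" for n t
  proof -
    have "cmod (y' n t) = \<bar>Re (y' n t)\<bar>" using im by (rule cmod_eq_Re)
    also have "\<dots> \<le> \<bar>Re (x n t)\<bar> + e" using re[of n t] by linarith
    also have "\<dots> \<le> Bx + e" using Bx abs_Re_le_cmod[of "x n t"] by (meson add_right_mono order_trans)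
    finally show ?thesis .
  qed
  have y'l: "y' \<in> linf_CX" unfolding linf_CX_def using cy' yb by blast
  have b'l: "b' \<in> linf_CX" unfolding linf_CX_def using cb' bb by blast
  have sa': "q_selfadjoint \<omega> \<Delta> y'"
  proof -
    have eq: "(\<lambda>n t. y' n t - cnj (y' n t)) = (\<lambda>n t. 0)"
      using im by (intro ext) (simp add: complex_eq_iff)
    show ?thesis unfolding q_selfadjoint_def eq by (rule zero_J2)
  qed
  have ybJ: "(\<lambda>n t. y' n t * b' n t - 1) \<in> J2 \<omega> \<Delta>"
  proof (rule J2_I)
    have "cmod (y' n t * b' n t - 1) \<le> (Bx + e) * (2 / e) + 1" for n t
    proof -
      have "cmod (y' n t * b' n t - 1) \<le> cmod (y' n t * b' n t) + 1"
        using norm_triangle_ineq4[of "y' n t * b' n t" 1] by simp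
      also have "cmod (y' n t * b' n t) = cmod (y' n t) * cmod (b' n t)" by (rule norm_mult)
      also have "\<dots> \<le> (Bx + e) * (2 / e)"
        by (rule mult_mono[OF yb[of n t] bb[of n t] order_trans[OF norm_ge_zero yb[of n t]] norm_ge_zero])
      finally show ?thesis by simp
    qed
    moreover have "continuous_on UNIV (\<lambda>t. y' n t * b' n t - 1)" for n
      by (intro continuous_intros cy' cb')
    ultimately show "(\<lambda>n t. y' n t * b' n t - 1) \<in> linf_CX" unfolding linf_CX_def by blast
    fix a :: ennreal assume "a > 0"
    then show "eventually (\<lambda>n. tau_sup2 \<Delta> (\<lambda>t. y' n t * b' n t - 1) < a) \<omega>"
      using kk unfolding y'_def b'_def by blast
  qed
  have inv': "q_invertible \<omega> \<Delta> y'"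
  proof -
    have eq: "(\<lambda>n t. b' n t * y' n t - 1) = (\<lambda>n t. y' n t * b' n t - 1)" by (simp add: mult.commute)
    show ?thesis unfolding q_invertible_def
      by (rule bexI[of _ b'], rule conjI[OF ybJ], subst eq, rule ybJ, rule b'l)
  qed
  define j where "j n t = complex_of_real (Re (x n t)) - x n t" for n t
  have cx: "continuous_on UNIV (x n)" for n using linf_cont[OF x] .
  have jl: "j \<in> linf_CX"
  proof -
    have "cmod (j n t) \<le> Bx" for n t
      unfolding j_def re_minus_norm using Bx abs_Im_le_cmod order_trans by blast
    moreover have "continuous_on UNIV (j n)" for n unfolding j_def[abs_def] by (intro continuous_intros cx)
    ultimately show ?thesis unfolding linf_CX_def by blast
  qed
  have xsa: "(\<lambda>n t. x n t - cnj (x n t)) \<in> J2 \<omega> \<Delta>" using sa unfolding q_selfadjoint_def .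
  have jJ: "j \<in> J2 \<omega> \<Delta>"
  proof (rule J2_dom[OF jl xsa])
    fix n
    have "tau_sup2 \<Delta> (j n) \<le> ennreal (1/4) * tau_sup2 \<Delta> (\<lambda>t. x n t - cnj (x n t))
       + ennreal 0 * tau_sup2 \<Delta> (\<lambda>t. complex_of_real 0) + ennreal 0 * tau_sup2 \<Delta> (\<lambda>t. complex_of_real 0)"
    proof (rule tau_bound3[OF P])
      show "continuous_on UNIV (\<lambda>t. x n t - cnj (x n t))" by (intro continuous_intros cx)
      show "continuous_on UNIV (\<lambda>t::'a. complex_of_real 0)" by (intro continuous_intros)
      show "continuous_on UNIV (\<lambda>t::'a. complex_of_real 0)" by (intro continuous_intros)
      show "(0::real) \<le> 1/4" "(0::real) \<le> 0" "(0::real) \<le> 0" by simp_all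
      fix t
      show "(cmod (j n t))\<^sup>2 \<le> 1/4 * (cmod (x n t - cnj (x n t)))\<^sup>2 + 0 * (cmod (complex_of_real 0))\<^sup>2 + 0 * (cmod (complex_of_real 0))\<^sup>2"
        unfolding j_def re_minus_norm cnj_minus_norm by (simp add: power2_eq_square)
    qed
    then show "tau_sup2 \<Delta> (j n) \<le> ennreal (1/4) * tau_sup2 \<Delta> (\<lambda>t. x n t - cnj (x n t))" by simp
  qed
  have "q_norm \<omega> \<Delta> (\<lambda>n t. x n t - y' n t) \<le> sup_norm (\<lambda>n t. (x n t - y' n t) + j n t)"
    by (rule q_norm_le[OF x y'l jJ])
  also have "\<dots> \<le> e"
  proof (rule sup_norm_le)
    fix n t
    have "x n t - y' n t + j n t = complex_of_real (Re (x n t) - Re (y' n t))"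
      unfolding j_def using im[of n t] by (simp add: complex_eq_iff)
    then have "cmod (x n t - y' n t + j n t) = \<bar>Re (x n t) - Re (y' n t)\<bar>" by (simp only: norm_of_real)
    then show "cmod (x n t - y' n t + j n t) \<le> e" using re[of n t] by (simp add: abs_minus_commute)
  qed
  also have "e < \<epsilon>" unfolding e_def using \<epsilon> by simp
  finally show "\<exists>y\<in>linf_CX. q_selfadjoint \<omega> \<Delta> y \<and> q_invertible \<omega> \<Delta> y \<and> q_norm \<omega> \<Delta> (\<lambda>n t. x n t - y n t) < \<epsilon>"
    using y'l sa' inv' by blast
qed

theorem corollary2p14:
  fixes \<omega> :: "nat filter" and \<Delta> :: "'a::metric_space measure set"
  assumes "compact (UNIV :: 'a set)"
    and "free_ultrafilter \<omega>"
    and "\<forall>\<mu>\<in>\<Delta>. borel_prob \<mu>"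
    and "weak_star_closed \<Delta>"
  shows "q_real_rank_zero \<omega> \<Delta> \<longleftrightarrow> q_sa_inv_dense_norm2 \<omega> \<Delta>"
  using dir1[OF assms(3,2)] dir2[OF assms(3,2)] by blast

end
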